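(* Assume the setting described in the context. There is a generalized $C$-sequence $\langle e^m_\alpha:\alpha<\lambda,m<\omega\rangle$ on $\lambda$ such that for all $\alpha<\lambda$ and $m<\omega$: (1) $|e^m_\alpha|\leq\mathrm{cf}(\alpha)+\mu_m^+$, and (2) if $\delta\in S\cap e^m_\alpha$ then $C_\delta[m]\subseteq e^m_\alpha$.
   Context: Setting: $\mu$ is a singular cardinal with $\mathrm{cf}(\mu)=\aleph_0$, $\lambda=\mu^+$, $\sigma$ is regular with $\aleph_0<\sigma<\mu$, $S$ is a stationary subset of $\{\delta<\lambda:\mathrm{cf}(\delta)=\sigma\}$, and $\langle\mu_i:i<\omega\rangle$ is a strictly increasing sequence of regular cardinals cofinal in $\mu$ with $\sigma<\mu_0$. For $\delta\in S$, $c^0_\delta$ is the increasing enumeration of a club subset of $\delta$ of order type $\sigma$, and for every club $E\subseteq\lambda$ the set of $\delta\in S$ with $\mathrm{ran}(c^0_\delta)\subseteq E$ is stationary. $I(\delta,\epsilon,m)=(c^0_\delta(\omega\cdot\epsilon+m),c^0_\delta(\omega\cdot\epsilon+m+1)]$ for $\epsilon<\sigma$, $m<\omega$. $\langle C_\delta:\delta\in S\rangle$ satisfies: $C_\delta$ club in $\delta$; $\mathrm{ran}(c^0_\delta)\subseteq C_\delta$; $|C_\delta\cap I(\delta,\epsilon,m)|\leq\mu_m^+$; every $\alpha\in\mathrm{nacc}(C_\delta)\cap I(\delta,\epsilon,m)$ has $\mathrm{cf}(\alpha)>\mu_m^+$; for every club $E\subseteq\lambda$ there are stationarily many $\delta\in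 S$ with $E\cap\mathrm{nacc}(C_\delta)\cap I(\delta,\epsilon,m)\neq\emptyset$ for all $\epsilon,m$. ($\mathrm{nacc}(C)=C\setminus\{\alpha:\alpha=\sup(\alpha\cap C)\}$.) $C_\delta[m]=\mathrm{ran}(c^0_\delta)\cup\bigcup\{C_\delta\cap I(\delta,\epsilon,i):\epsilon<\sigma, i\leq m\}$. A generalized $C$-sequence on $\lambda$ is a family $\langle e^m_\alpha:\alpha<\lambda,m<\omega\rangle$ such that each $e^m_\alpha$ is closed unbounded in $\alpha$ and $e^m_\alpha\subseteq e^{m+1}_\alpha$. *)

theory Defs
  imports Main
begin

text \<open>Ordinals below lambda are modelled as the elements of a type 'a of class wellorder
  whose order type is lambda; all cardinals involved are elements of this type
  (initial ordinals below lambda).\<close>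

definition card_le :: "'b set \<Rightarrow> 'c set \<Rightarrow> bool" where
  "card_le A B \<longleftrightarrow> (card_of A, card_of B) \<in> ordLeq"

definition card_less :: "'b set \<Rightarrow> 'c set \<Rightarrow> bool" where
  "card_less A B \<longleftrightarrow> (card_of A, card_of B) \<in> ordLess"

definition card_eq :: "'b set \<Rightarrow> 'c set \<Rightarrow> bool" where
  "card_eq A B \<longleftrightarrow> (card_of A, card_of B) \<in> ordIso"

definition zero_o :: "'a::wellorder" where
  "zero_o = (LEAST x. True)"

definition osucc :: "'a::wellorder \<Rightarrow> 'a" where
  "osucc x = (LEAST y. x < y)"

definition is_lim :: "'a::wellorder \<Rightarrow> bool" where
  "is_lim x \<longleftrightarrow> (\<exists>y. y < x) \<and> (\<forall>y<x. \<exists>z. y < z \<and> z < x)"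

definition omega_o :: "'a::wellorder" where
  "omega_o = (LEAST x. is_lim x)"

text \<open>zero together with the limit ordinals: the ordinals of the form omega * epsilon\<close>
definition lims0 :: "'a::wellorder set" where
  "lims0 = {x. x = zero_o \<or> is_lim x}"

definition omega_times :: "'a::wellorder \<Rightarrow> 'a" where
  "omega_times \<epsilon> = (THE \<eta>. \<eta> \<in> lims0 \<and>
      (\<exists>f. strict_mono_on {..<\<epsilon>} f \<and> f ` {..<\<epsilon>} = {x \<in> lims0. x < \<eta>}))"

definition om_plus :: "'a::wellorder \<Rightarrow> nat \<Rightarrow> 'a" where
  "om_plus \<epsilon> m = (osucc ^^ m) (omega_times \<epsilon>)"

definition cf :: "'a::wellorder \<Rightarrow> 'a" where
  "cf \<alpha> = (LEAST \<kappa>. \<exists>A. A \<subseteq> {..<\<alpha>} \<and> (\<forall>\<beta><\<alpha>. \<exists>\<gamma>\<in>A. \<beta> \<le> \<gamma>) \<and> card_eq A {..<\<kappa>})"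

definition is_cardinal :: "'a::wellorder \<Rightarrow> bool" where
  "is_cardinal \<kappa> \<longleftrightarrow> (\<forall>y<\<kappa>. \<not> card_eq {..<y} {..<\<kappa>})"

definition csucc :: "'a::wellorder \<Rightarrow> 'a" where
  "csucc \<kappa> = (LEAST x. card_less {..<\<kappa>} {..<x})"

definition regular :: "'a::wellorder \<Rightarrow> bool" where
  "regular \<kappa> \<longleftrightarrow> omega_o \<le> \<kappa> \<and> cf \<kappa> = \<kappa>"

definition acc_pt :: "'a::wellorder set \<Rightarrow> 'a \<Rightarrow> bool" where
  "acc_pt C \<beta> \<longleftrightarrow> (\<exists>\<gamma>. \<gamma> < \<beta>) \<and> (\<forall>\<gamma><\<beta>. \<exists>c\<in>C. \<gamma> < c \<and> c < \<beta>)"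

definition nacc :: "'a::wellorder set \<Rightarrow> 'a set" where
  "nacc C = {\<alpha> \<in> C. \<not> acc_pt C \<alpha>}"

definition club_in :: "'a::wellorder set \<Rightarrow> 'a \<Rightarrow> bool" where
  "club_in C \<delta> \<longleftrightarrow> C \<subseteq> {..<\<delta>} \<and> (\<forall>\<beta><\<delta>. acc_pt C \<beta> \<longrightarrow> \<beta> \<in> C)
      \<and> (\<forall>\<beta><\<delta>. \<exists>\<gamma>\<in>C. \<beta> \<le> \<gamma>)"

definition club :: "'a::wellorder set \<Rightarrow> bool" where
  "club E \<longleftrightarrow> (\<forall>\<beta>. acc_pt E \<beta> \<longrightarrow> \<beta> \<in> E) \<and> (\<forall>\<beta>. \<exists>\<gamma>\<in>E. \<beta> \<le> \<gamma>)"

definition stationary :: "'a::wellorder set \<Rightarrow> bool" where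
  "stationary T \<longleftrightarrow> (\<forall>E. club E \<longrightarrow> T \<inter> E \<noteq> {})"

definition Iv :: "('a::wellorder \<Rightarrow> 'a \<Rightarrow> 'a) \<Rightarrow> 'a \<Rightarrow> 'a \<Rightarrow> nat \<Rightarrow> 'a set" where
  "Iv c0 \<delta> \<epsilon> m = {x. c0 \<delta> (om_plus \<epsilon> m) < x \<and> x \<le> c0 \<delta> (om_plus \<epsilon> (Suc m))}"

definition Cm :: "('a::wellorder \<Rightarrow> 'a \<Rightarrow> 'a) \<Rightarrow> ('a \<Rightarrow> 'a set) \<Rightarrow> 'a \<Rightarrow> 'a \<Rightarrow> nat \<Rightarrow> 'a set" where
  "Cm c0 C \<sigma> \<delta> m = c0 \<delta> ` {..<\<sigma>} \<union>
      (\<Union>\<epsilon>\<in>{..<\<sigma>}. \<Union>i\<in>{..m}. C \<delta> \<inter> Iv c0 \<delta> \<epsilon> i)"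

end

theory Submission imports Defs begin

definition Wr :: "'a::wellorder rel" where "Wr = {(x,y). x \<le> y}"

lemma Wr_Well_order: "Well_order (Wr::'a::wellorder rel)"
proof -
  have f: "Field (Wr::'a rel) = UNIV" unfolding Wr_def Field_def by auto
  have "well_order_on UNIV (Wr::'a rel)"
    unfolding well_order_on_def linear_order_on_def partial_order_on_def preorder_on_def
      refl_on_def trans_def antisym_def total_on_def
  proof (intro conjI)
    have "Wr - Id = {(x::'a,y). x < y}" unfolding Wr_def by auto
    then show "wf (Wr - Id :: 'a rel)" using wf by simp
  qed (auto simp: Wr_def)
  then show ?thesis using f by simp
qed

lemma zero_le: "zero_o \<le> (x::'a::wellorder)"
  unfolding zero_o_def by (rule Least_le) simp

lemma cardeq_refl: "card_eq A A" unfolding card_eq_def by (rule card_of_refl)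

lemma cf_P: "\<exists>A. A \<subseteq> {..<\<alpha>} \<and> (\<forall>\<beta><\<alpha>. \<exists>\<gamma>\<in>A. \<beta> \<le> \<gamma>) \<and> card_eq A {..<cf (\<alpha>::'a::wellorder)}"
  unfolding cf_def
  by (rule LeastI[where k=\<alpha>]) (use cardeq_refl in auto)

lemma cf_le: "cf \<alpha> \<le> (\<alpha>::'a::wellorder)"
  unfolding cf_def
  by (rule Least_le) (use cardeq_refl in auto)

lemma cf_min: "A \<subseteq> {..<\<alpha>} \<Longrightarrow> (\<forall>\<beta><\<alpha>. \<exists>\<gamma>\<in>A. \<beta> \<le> \<gamma>) \<Longrightarrow> card_eq A {..<\<kappa>} \<Longrightarrow> cf (\<alpha>::'a::wellorder) \<le> \<kappa>"
  unfolding cf_def by (rule Least_le) blast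

lemma cf_zero: assumes "cf x = zero_o" shows "x = (zero_o::'a::wellorder)"
proof -
  obtain A where A: "A \<subseteq> {..<x}" "\<forall>\<beta><x. \<exists>\<gamma>\<in>A. \<beta> \<le> \<gamma>" "card_eq A {..<cf x}" using cf_P by blast
  have nz: "\<And>y. \<not> y < (zero_o::'a)" using zero_le not_less by blast
  have e: "{..<cf x} = ({}::'a set)" using assms nz by auto
  have "(card_of A, card_of ({}::'a set)) \<in> ordLeq" using A(3) e unfolding card_eq_def by (metis ordIso_imp_ordLeq)
  then obtain f where "f ` A \<subseteq> {}" using card_of_ordLeq[of A "{}::'a set"] by blast
  then have "A = {}" by blast
  show ?thesis
  proof (rule ccontr)
    assume "x \<noteq> zero_o"
    then have "zero_o < x" using zero_le[of x] by simp
    then show False using A(2) \<open>A = {}\<close> by blast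
  qed
qed

lemma osucc_below: assumes "zero_o < (s::'a::wellorder)" shows "{..<osucc zero_o} = {zero_o::'a}" and "zero_o < osucc (zero_o::'a)"
proof -
  show lt: "zero_o < osucc (zero_o::'a)" unfolding osucc_def by (rule LeastI[where k=s]) (rule assms)
  show "{..<osucc zero_o} = {zero_o::'a}"
  proof safe
    fix z assume "z < osucc (zero_o::'a)"
    then have "\<not> zero_o < z" unfolding osucc_def using not_less_Least by blast
    then show "z = zero_o" using zero_le[of z] by simp
  qed (use lt in auto)
qed

lemma single_cardeq: "card_eq {a} {b}"
  unfolding card_eq_def by (rule card_of_ordIso[THEN iffD1]) (rule exI[of _ "\<lambda>_. b"], simp add: bij_betw_def)

lemma lim_infinite: assumes "is_lim (x::'a::wellorder)" shows "infinite {..<x}"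
proof
  assume f: "finite {..<x}"
  obtain y where "y < x" using assms is_lim_def by auto
  then have ne: "{..<x} \<noteq> {}" by auto
  have "Max {..<x} < x" using Max_in[OF f ne] by simp
  then obtain z where "Max {..<x} < z" "z < x" using assms is_lim_def by auto
  then show False using Max_ge[OF f, of z] by simp
qed

lemma setting_lims:
  fixes \<mu> \<sigma> :: "'a::wellorder"
  assumes mu_cf: "cf \<mu> = omega_o"
    and sigma_reg: "regular \<sigma>"
    and sigma_gt: "omega_o < \<sigma>"
    and sigma_lt: "\<sigma> < \<mu>"
  shows "is_lim \<sigma>" "is_lim (omega_o::'a)"
proof -
  show ls: "is_lim \<sigma>"
  proof (rule ccontr)
    assume nl: "\<not> is_lim \<sigma>"
    have z: "zero_o < \<sigma>" using le_less_trans[OF zero_le sigma_gt] .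
    then obtain y where y: "y < \<sigma>" "\<forall>z. \<not> (y < z \<and> z < \<sigma>)" using nl unfolding is_lim_def by blast
    have "\<forall>\<beta><\<sigma>. \<exists>\<gamma>\<in>{y}. \<beta> \<le> \<gamma>" using y not_less by blast
    then have c: "cf \<sigma> \<le> osucc zero_o" using y(1) by (intro cf_min[of "{y}"]) (auto simp: osucc_below[OF z] single_cardeq)
    have r: "cf \<sigma> = \<sigma>" using sigma_reg unfolding regular_def by blast
    from c have "\<sigma> \<le> osucc zero_o" unfolding r .
    then have "(omega_o::'a) < osucc zero_o" by (rule less_le_trans[OF sigma_gt])
    then have "(omega_o::'a) = zero_o" using osucc_below[OF z] by auto
    then have "\<mu> = zero_o" using mu_cf cf_zero by metis
    then show False using z sigma_lt by (metis less_asym less_trans)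
  qed
  show "is_lim (omega_o::'a)" unfolding omega_o_def by (rule LeastI[of _ \<sigma>]) (rule ls)
qed

lemma CF:
  fixes D :: "'a::wellorder set"
  assumes "D \<subseteq> {..<\<delta>}" "\<forall>\<beta><\<delta>. \<exists>\<gamma>\<in>D. \<beta> \<le> \<gamma>"
  shows "card_le {..<cf \<delta>} D"
proof -
  define r where "r = Restr (Wr::'a rel) {..<\<delta>}"
  have W: "Well_order r" unfolding r_def by (rule Well_order_Restr[OF Wr_Well_order])
  have F: "Field r = {..<\<delta>}" unfolding r_def Wr_def Field_def by auto
  have "(card_of {..<\<delta>}, r) \<in> ordLeq" using card_of_least W F well_order_on_Field by metis
  then have le: "(card_of D, r) \<in> ordLeq" using card_of_mono1[OF assms(1)] ordLeq_transitive by blast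
  have "\<exists>a\<le>\<delta>. card_eq D {..<a}"
  proof (cases "(card_of D, r) \<in> ordLess")
    case True
    then obtain a where a: "a \<in> Field r" "(card_of D, Restr r (underS r a)) \<in> ordIso"
      using ordLess_iff_ordIso_Restr[OF W card_of_Well_order] by blast
    have a2: "a < \<delta>" using a F by auto
    have "underS r a = {..<a}" using a2 unfolding underS_def r_def Wr_def by auto
    moreover have "Field (Restr r {..<a}) = {..<a}" using a2 unfolding r_def Wr_def Field_def by auto
    ultimately have "(card_of D, card_of {..<a}) \<in> ordIso"
      using a(2) card_of_mono2 Field_card_of ordIso_iff_ordLeq by metis
    then show ?thesis using a2 card_eq_def less_imp_le by blast
  next
    case False
    then have "(card_of D, r) \<in> ordIso" using le ordLeq_iff_ordLess_or_ordIso by blast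
    then have "(card_of D, card_of {..<\<delta>}) \<in> ordIso"
      using F card_of_mono2 Field_card_of ordIso_iff_ordLeq by metis
    then show ?thesis using card_eq_def by blast
  qed
  then obtain a :: 'a where a: "card_eq D {..<a}" by blast
  then have "cf \<delta> \<le> a" using cf_min assms by blast
  then have "card_le {..<cf \<delta>} {..<a}" unfolding card_le_def by (intro card_of_mono1) auto
  then show ?thesis using a unfolding card_le_def card_eq_def
    using ordIso_iff_ordLeq ordLeq_transitive by blast
qed


definition clo :: "'a::wellorder \<Rightarrow> 'a set \<Rightarrow> 'a set" where
  "clo \<alpha> X = X \<union> {\<beta>. \<beta> < \<alpha> \<and> acc_pt X \<beta>}"

lemma clo_ext: "X \<subseteq> clo \<alpha> X" unfolding clo_def by auto

lemma acc_mono: "X \<subseteq> Y \<Longrightarrow> acc_pt X b \<Longrightarrow> acc_pt Y b" unfolding acc_pt_def by blast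

lemma clo_mono: "X \<subseteq> Y \<Longrightarrow> clo \<alpha> X \<subseteq> clo \<alpha> Y" unfolding clo_def using acc_mono by blast

lemma clo_sub: "X \<subseteq> {..<\<alpha>} \<Longrightarrow> clo \<alpha> X \<subseteq> {..<\<alpha>}" unfolding clo_def by auto

lemma acc_clo: assumes "acc_pt (clo \<alpha> X) \<beta>" shows "acc_pt X \<beta>"
  unfolding acc_pt_def
proof (intro conjI allI impI)
  show "\<exists>\<gamma>. \<gamma> < \<beta>" using assms acc_pt_def by blast
  fix \<gamma> assume "\<gamma> < \<beta>"
  then obtain c where c: "c \<in> clo \<alpha> X" "\<gamma> < c" "c < \<beta>" using assms acc_pt_def by blast
  show "\<exists>c\<in>X. \<gamma> < c \<and> c < \<beta>"
  proof (cases "c \<in> X")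
    case True then show ?thesis using c by blast
  next
    case False
    then have "acc_pt X c" using c(1) clo_def by auto
    then obtain d where "d \<in> X" "\<gamma> < d" "d < c" using c(2) acc_pt_def by blast
    then show ?thesis using c(3) by (meson less_trans)
  qed
qed

lemma clo_closed: "\<beta> < \<alpha> \<Longrightarrow> acc_pt (clo \<alpha> X) \<beta> \<Longrightarrow> \<beta> \<in> clo \<alpha> X"
  using acc_clo unfolding clo_def by blast

lemma card_le_trans: "card_le A B \<Longrightarrow> card_le B C \<Longrightarrow> card_le A C"
  unfolding card_le_def using ordLeq_transitive by blast

lemma card_le_sub: "A \<subseteq> B \<Longrightarrow> card_le A B" unfolding card_le_def by (rule card_of_mono1)

lemma card_le_Un: "infinite B \<Longrightarrow> card_le X B \<Longrightarrow> card_le Y B \<Longrightarrow> card_le (X \<union> Y) B"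
  unfolding card_le_def
  by (rule card_of_Un_ordLeq_infinite_Field) (auto simp: Field_card_of card_of_card_order_on)

lemma card_le_UN: "infinite B \<Longrightarrow> card_le I B \<Longrightarrow> \<forall>i\<in>I. card_le (A i) B \<Longrightarrow> card_le (\<Union>i\<in>I. A i) B"
  unfolding card_le_def by (rule card_of_UNION_ordLeq_infinite)

lemma card_le_finite: "finite A \<Longrightarrow> infinite B \<Longrightarrow> card_le A B"
  unfolding card_le_def
  by (rule ordLess_imp_ordLeq, rule finite_ordLess_infinite) (auto simp: Field_card_of card_of_well_order_on)

lemma card_le_image: "card_le (f ` A) A" unfolding card_le_def by (rule card_of_image)

lemma card_le_inj: "inj_on f A \<Longrightarrow> f ` A \<subseteq> B \<Longrightarrow> card_le A B"
  unfolding card_le_def using card_of_ordLeq by blast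

lemma clo_card: assumes B: "infinite B" and X: "card_le X B" shows "card_le (clo \<alpha> X) B"
proof -
  define T1 where "T1 = {\<beta>. acc_pt X \<beta> \<and> \<beta> \<notin> X \<and> (\<exists>x\<in>X. \<beta> < x)}"
  define T2 where "T2 = {\<beta>. acc_pt X \<beta> \<and> \<beta> \<notin> X \<and> \<not> (\<exists>x\<in>X. \<beta> < x)}"
  have sub: "clo \<alpha> X \<subseteq> X \<union> T1 \<union> T2" unfolding clo_def T1_def T2_def by auto
  define f where "f \<beta> = (LEAST x. x \<in> X \<and> \<beta> < x)" for \<beta>
  have fI: "f \<beta> \<in> X \<and> \<beta> < f \<beta>" if "\<beta> \<in> T1" for \<beta>
  proof -
    from that obtain x where x: "x \<in> X" "\<beta> < x" unfolding T1_def by blast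
    show ?thesis unfolding f_def by (rule LeastI[of "\<lambda>x. x \<in> X \<and> \<beta> < x" x]) (use x in blast)
  qed
  have key: "f b1 < f b2" if h: "b1 \<in> T1" "b2 \<in> T1" "b1 < b2" for b1 b2
  proof -
    obtain c where c: "c \<in> X" "b1 < c" "c < b2" using h(2,3) T1_def acc_pt_def by blast
    have "f b1 \<le> c" unfolding f_def by (rule Least_le) (use c in blast)
    then show ?thesis using le_less_trans[OF _ less_trans[OF c(3)]] fI[OF h(2)] by blast
  qed
  have "inj_on f T1"
  proof (rule inj_onI)
    fix b1 b2 assume "b1 \<in> T1" "b2 \<in> T1" "f b1 = f b2"
    then show "b1 = b2" using key by (metis less_irrefl neqE)
  qed
  then have "card_le T1 X" using fI by (intro card_le_inj[of f]) auto
  then have c1: "card_le T1 B" using card_le_trans X by blast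
  have T2b: "b' = b" if hb: "b \<in> T2" and hb': "b' \<in> T2" for b b'
  proof (rule ccontr)
    have nb: "\<forall>x\<in>X. \<not> b < x" "\<forall>x\<in>X. \<not> b' < x" using hb hb' unfolding T2_def by auto
    have ab: "acc_pt X b" "acc_pt X b'" using hb hb' unfolding T2_def by auto
    assume "b' \<noteq> b"
    then have "b < b' \<or> b' < b" by auto
    then show False
    proof
      assume "b < b'"
      then obtain c where "c \<in> X" "b < c" using ab(2) unfolding acc_pt_def by blast
      then show False using nb(1) by blast
    next
      assume "b' < b"
      then obtain c where "c \<in> X" "b' < c" using ab(1) unfolding acc_pt_def by blast
      then show False using nb(2) by blast
    qed
  qed
  have "finite T2"
  proof (cases "T2 = {}")
    case False
    then obtain b where "b \<in> T2" by blast
    then have "T2 \<subseteq> {b}" using T2b by blast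
    then show ?thesis using finite_subset by blast
  qed simp
  then have c2: "card_le T2 B" using card_le_finite B by blast
  have "card_le (X \<union> T1 \<union> T2) B" by (rule card_le_Un[OF B card_le_Un[OF B X c1] c2])
  then show ?thesis by (rule card_le_trans[OF card_le_sub[OF sub]])
qed


primrec Yseq :: "('a::wellorder \<Rightarrow> 'a set) \<Rightarrow> 'a \<Rightarrow> 'a set \<Rightarrow> nat \<Rightarrow> 'a set" where
  "Yseq F \<alpha> A0 0 = clo \<alpha> A0"
| "Yseq F \<alpha> A0 (Suc n) = clo \<alpha> (Yseq F \<alpha> A0 n \<union> (\<Union>\<delta>\<in>Yseq F \<alpha> A0 n. F \<delta>))"

definition eset :: "('a::wellorder \<Rightarrow> 'a set) \<Rightarrow> 'a \<Rightarrow> 'a set \<Rightarrow> 'a set" where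
  "eset F \<alpha> A0 = clo \<alpha> (\<Union>n. Yseq F \<alpha> A0 n)"

lemma Yseq_mono_F: "(\<And>d. F d \<subseteq> G d) \<Longrightarrow> Yseq F \<alpha> A0 n \<subseteq> Yseq G \<alpha> A0 n"
proof (induction n)
  case (Suc n)
  then have "Yseq F \<alpha> A0 n \<union> (\<Union>\<delta>\<in>Yseq F \<alpha> A0 n. F \<delta>) \<subseteq> Yseq G \<alpha> A0 n \<union> (\<Union>\<delta>\<in>Yseq G \<alpha> A0 n. G \<delta>)" by blast
  then show ?case by (simp add: clo_mono)
qed simp

lemma eset_mono_F: "(\<And>d. F d \<subseteq> G d) \<Longrightarrow> eset F \<alpha> A0 \<subseteq> eset G \<alpha> A0"
proof -
  assume h: "\<And>d. F d \<subseteq> G d"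
  have "(\<Union>n. Yseq F \<alpha> A0 n) \<subseteq> (\<Union>n. Yseq G \<alpha> A0 n)"
    using Yseq_mono_F[of F G, OF h] by (meson UN_mono subset_refl)
  then show ?thesis unfolding eset_def by (rule clo_mono)
qed

lemma Yseq_sub: assumes "A0 \<subseteq> {..<\<alpha>}" "\<And>d. d < \<alpha> \<Longrightarrow> F d \<subseteq> {..<d}"
  shows "Yseq F \<alpha> A0 n \<subseteq> {..<\<alpha>}"
proof (induction n)
  case 0 then show ?case using assms clo_sub by simp
next
  case (Suc n)
  have "(\<Union>\<delta>\<in>Yseq F \<alpha> A0 n. F \<delta>) \<subseteq> {..<\<alpha>}"
    using Suc assms(2) by fastforce
  then show ?case using Suc by (simp add: clo_sub)
qed

lemma Yseq_step: "Yseq F \<alpha> A0 n \<subseteq> Yseq F \<alpha> A0 (Suc n)" "\<delta> \<in> Yseq F \<alpha> A0 n \<Longrightarrow> F \<delta> \<subseteq> Yseq F \<alpha> A0 (Suc n)"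
  using clo_ext[of "Yseq F \<alpha> A0 n \<union> (\<Union>\<delta>\<in>Yseq F \<alpha> A0 n. F \<delta>)" \<alpha>] by auto

lemma Yseq_card: assumes B: "infinite B" "card_le A0 B" "\<And>d. card_le (F d) B"
  shows "card_le (Yseq F \<alpha> A0 n) B"
proof (induction n)
  case 0 then show ?case by (simp add: clo_card assms)
next
  case (Suc n)
  have "card_le (\<Union>\<delta>\<in>Yseq F \<alpha> A0 n. F \<delta>) B" using card_le_UN Suc B by blast
  then show ?case using Suc by (simp add: clo_card card_le_Un B(1))
qed

lemma Yseq_closed: "\<beta> < \<alpha> \<Longrightarrow> acc_pt (Yseq F \<alpha> A0 n) \<beta> \<Longrightarrow> \<beta> \<in> Yseq F \<alpha> A0 n"
  by (cases n) (auto intro: clo_closed)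

lemma eset_props:
  fixes \<alpha> :: "'a::wellorder"
  assumes A0: "A0 \<subseteq> {..<\<alpha>}" "\<forall>\<beta><\<alpha>. \<exists>\<gamma>\<in>A0. \<beta> \<le> \<gamma>"
    and F: "\<And>d. d < \<alpha> \<Longrightarrow> F d \<subseteq> {..<d}"
    and B: "infinite B" "card_le A0 B" "\<And>d. card_le (F d) B"
  shows "club_in (eset F \<alpha> A0) \<alpha>" "card_le (eset F \<alpha> A0) B"
    "\<forall>\<delta>\<in>eset F \<alpha> A0. F \<delta> \<subseteq> eset F \<alpha> A0 \<or>
        (\<exists>g::nat \<Rightarrow> 'a. range g \<subseteq> {..<\<delta>} \<and> (\<forall>\<beta><\<delta>. \<exists>n. \<beta> \<le> g n))"
proof -
  let ?U = "\<Union>n. Yseq F \<alpha> A0 n"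
  have U: "?U \<subseteq> {..<\<alpha>}" using Yseq_sub[OF A0(1) F] by blast
  have A0U: "A0 \<subseteq> eset F \<alpha> A0" unfolding eset_def using clo_ext[of A0 \<alpha>] clo_ext[of ?U \<alpha>]
    by (metis (no_types, lifting) Yseq.simps(1) UN_upper iso_tuple_UNIV_I subset_trans)
  show "club_in (eset F \<alpha> A0) \<alpha>" unfolding club_in_def
  proof (intro conjI allI impI)
    show "eset F \<alpha> A0 \<subseteq> {..<\<alpha>}" unfolding eset_def using clo_sub U by blast
    show "\<And>\<beta>. \<beta> < \<alpha> \<Longrightarrow> acc_pt (eset F \<alpha> A0) \<beta> \<Longrightarrow> \<beta> \<in> eset F \<alpha> A0"
      unfolding eset_def by (rule clo_closed)
    show "\<And>\<beta>. \<beta> < \<alpha> \<Longrightarrow> \<exists>\<gamma>\<in>eset F \<alpha> A0. \<beta> \<le> \<gamma>" using A0(2) A0U by blast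
  qed
  have "card_le (UNIV::nat set) B" using B(1) unfolding card_le_def by (simp add: infinite_iff_card_of_nat)
  then have "card_le ?U B" by (rule card_le_UN[OF B(1)]) (simp add: Yseq_card[OF B])
  then show "card_le (eset F \<alpha> A0) B" unfolding eset_def by (rule clo_card[OF B(1)])
  show "\<forall>\<delta>\<in>eset F \<alpha> A0. F \<delta> \<subseteq> eset F \<alpha> A0 \<or>
        (\<exists>g::nat \<Rightarrow> 'a. range g \<subseteq> {..<\<delta>} \<and> (\<forall>\<beta><\<delta>. \<exists>n. \<beta> \<le> g n))"
  proof
    fix \<delta> assume d: "\<delta> \<in> eset F \<alpha> A0"
    show "F \<delta> \<subseteq> eset F \<alpha> A0 \<or> (\<exists>g::nat \<Rightarrow> 'a. range g \<subseteq> {..<\<delta>} \<and> (\<forall>\<beta><\<delta>. \<exists>n. \<beta> \<le> g n))"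
    proof (cases "\<delta> \<in> ?U")
      case True
      then obtain n where "\<delta> \<in> Yseq F \<alpha> A0 n" by blast
      then have "F \<delta> \<subseteq> Yseq F \<alpha> A0 (Suc n)" by (rule Yseq_step)
      moreover have "Yseq F \<alpha> A0 (Suc n) \<subseteq> ?U" by blast
      moreover have "?U \<subseteq> clo \<alpha> ?U" by (rule clo_ext)
      ultimately show ?thesis unfolding eset_def by blast
    next
      case False
      then have acc: "acc_pt ?U \<delta>" and da: "\<delta> < \<alpha>" using d unfolding eset_def clo_def by auto
      have "\<exists>\<gamma><\<delta>. \<forall>c\<in>Yseq F \<alpha> A0 n. \<not> (\<gamma> < c \<and> c < \<delta>)" for n
      proof -
        have "\<not> acc_pt (Yseq F \<alpha> A0 n) \<delta>" using Yseq_closed[OF da] False by blast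
        then show ?thesis using acc unfolding acc_pt_def by blast
      qed
      then obtain g where g: "\<And>n. g n < \<delta> \<and> (\<forall>c\<in>Yseq F \<alpha> A0 n. \<not> (g n < c \<and> c < \<delta>))" by metis
      have "\<forall>\<beta><\<delta>. \<exists>n. \<beta> \<le> g n"
      proof (intro allI impI)
        fix \<beta> assume "\<beta> < \<delta>"
        then obtain c where c: "c \<in> ?U" "\<beta> < c" "c < \<delta>" using acc unfolding acc_pt_def by blast
        then obtain n where cn: "c \<in> Yseq F \<alpha> A0 n" by blast
        have "\<not> (g n < c)" using g[of n] cn c(3) by blast
        then have "c \<le> g n" by (simp add: not_less)
        then have "\<beta> \<le> g n" using less_imp_le[OF less_le_trans[OF c(2)]] by blast
        then show "\<exists>n. \<beta> \<le> g n" by blast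
      qed
      then show ?thesis using g by blast
    qed
  qed
qed


theorem lemma5p6:
  fixes \<mu> \<sigma> :: "'a::wellorder"
    and S :: "'a set"
    and \<mu>s :: "nat \<Rightarrow> 'a"
    and c0 :: "'a \<Rightarrow> 'a \<Rightarrow> 'a"
    and C :: "'a \<Rightarrow> 'a set"
  assumes mu_card: "is_cardinal \<mu>"
    and mu_cf: "cf \<mu> = omega_o"
    and lambda_succ: "(\<forall>x::'a. card_le {..<x} {..<\<mu>}) \<and> \<not> card_le (UNIV::'a set) {..<\<mu>}"
    and sigma_reg: "regular \<sigma>"
    and sigma_gt: "omega_o < \<sigma>"
    and sigma_lt: "\<sigma> < \<mu>"
    and S_cf: "S \<subseteq> {\<delta>. cf \<delta> = \<sigma>}"
    and S_stat: "stationary S"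
    and mus_reg: "\<forall>i. regular (\<mu>s i)"
    and mus_mono: "strict_mono \<mu>s"
    and mus_lt: "\<forall>i. \<mu>s i < \<mu>"
    and mus_cof: "\<forall>x<\<mu>. \<exists>i. x < \<mu>s i"
    and sigma_mus: "\<sigma> < \<mu>s 0"
    and c0_mono: "\<forall>\<delta>\<in>S. strict_mono_on {..<\<sigma>} (c0 \<delta>)"
    and c0_club: "\<forall>\<delta>\<in>S. club_in (c0 \<delta> ` {..<\<sigma>}) \<delta>"
    and c0_guess: "\<forall>E. club E \<longrightarrow> stationary {\<delta>\<in>S. c0 \<delta> ` {..<\<sigma>} \<subseteq> E}"
    and C_club: "\<forall>\<delta>\<in>S. club_in (C \<delta>) \<delta>"
    and C_c0: "\<forall>\<delta>\<in>S. c0 \<delta> ` {..<\<sigma>} \<subseteq> C \<delta>"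
    and C_size: "\<forall>\<delta>\<in>S. \<forall>\<epsilon><\<sigma>. \<forall>m.
                   card_le (C \<delta> \<inter> Iv c0 \<delta> \<epsilon> m) {..<csucc (\<mu>s m)}"
    and C_nacc_cf: "\<forall>\<delta>\<in>S. \<forall>\<epsilon><\<sigma>. \<forall>m. \<forall>\<alpha>\<in>nacc (C \<delta>) \<inter> Iv c0 \<delta> \<epsilon> m.
                   csucc (\<mu>s m) < cf \<alpha>"
    and C_guess: "\<forall>E. club E \<longrightarrow>
                   stationary {\<delta>\<in>S. \<forall>\<epsilon><\<sigma>. \<forall>m. E \<inter> nacc (C \<delta>) \<inter> Iv c0 \<delta> \<epsilon> m \<noteq> {}}"
  shows "\<exists>e :: 'a \<Rightarrow> nat \<Rightarrow> 'a set.
           (\<forall>\<alpha> m. club_in (e \<alpha> m) \<alpha> \<and> e \<alpha> m \<subseteq> e \<alpha> (Suc m)) \<and>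
           (\<forall>\<alpha> m. card_le (e \<alpha> m) ({..<cf \<alpha>} <+> {..<csucc (\<mu>s m)}) \<and>
                  (\<forall>\<delta>\<in>S \<inter> e \<alpha> m. Cm c0 C \<sigma> \<delta> m \<subseteq> e \<alpha> m))"
proof -
  have lims: "is_lim \<sigma>" "is_lim (omega_o::'a)" using setting_lims[OF mu_cf sigma_reg sigma_gt sigma_lt] by auto
  have sig_inf: "infinite {..<\<sigma>}" using lim_infinite[OF lims(1)] .
  have om_inf: "infinite {..<omega_o::'a}" using lim_infinite[OF lims(2)] .
  have sreg: "cf \<sigma> = \<sigma>" using sigma_reg unfolding regular_def by blast
  have nocount: "\<not> card_le {..<\<sigma>} (UNIV::nat set)"
  proof
    assume a: "card_le {..<\<sigma>} (UNIV::nat set)"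
    have "card_le (UNIV::nat set) {..<omega_o::'a}" unfolding card_le_def using om_inf by (simp add: infinite_iff_card_of_nat)
    then have l1: "card_le {..<\<sigma>} {..<omega_o::'a}" by (rule card_le_trans[OF a])
    have l2: "card_le {..<omega_o::'a} {..<\<sigma>}" using sigma_gt by (intro card_le_sub) simp
    have "card_eq {..<\<sigma>} {..<omega_o::'a}" using l1 l2 unfolding card_le_def card_eq_def by (simp add: ordIso_iff_ordLeq)
    then have "cf \<sigma> \<le> omega_o" by (intro cf_min[of "{..<\<sigma>}"]) auto
    then have "\<sigma> \<le> omega_o" unfolding sreg .
    then show False using leD sigma_gt by blast
  qed
  have cs_lt: "card_less {..<\<mu>s m} {..<csucc (\<mu>s m)}" for m
    unfolding csucc_def
  proof (rule LeastI[where k=\<mu>])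
    have "card_le {..<\<mu>s m} {..<\<mu>}" using mus_lt by (intro card_le_sub) (simp add: less_imp_le)
    moreover have "\<not> card_eq {..<\<mu>s m} {..<\<mu>}" using mu_card mus_lt unfolding is_cardinal_def by blast
    ultimately show "card_less {..<\<mu>s m} {..<\<mu>}" unfolding card_le_def card_eq_def card_less_def
      using ordLeq_iff_ordLess_or_ordIso by blast
  qed
  have cs_gt: "\<mu>s m < csucc (\<mu>s m)" for m
  proof (rule ccontr)
    assume "\<not> \<mu>s m < csucc (\<mu>s m)"
    then have "card_le {..<csucc (\<mu>s m)} {..<\<mu>s m}" by (intro card_le_sub) (simp add: not_less)
    then show False using cs_lt[of m] unfolding card_le_def card_less_def using not_ordLess_ordLeq by blast
  qed
  have mus_le: "i \<le> m \<Longrightarrow> \<mu>s i \<le> \<mu>s m" for i m by (simp add: strict_mono_less_eq[OF mus_mono])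
  have cs_mono: "i \<le> m \<Longrightarrow> csucc (\<mu>s i) \<le> csucc (\<mu>s m)" for i m
    unfolding csucc_def[of "\<mu>s i"]
  proof (rule Least_le)
    assume "i \<le> m"
    then have "card_le {..<\<mu>s i} {..<\<mu>s m}" using mus_le by (intro card_le_sub) simp
    then show "card_less {..<\<mu>s i} {..<csucc (\<mu>s m)}" using cs_lt[of m] unfolding card_le_def card_less_def
      by (rule ordLeq_ordLess_trans)
  qed
  define K where "K m = {..<csucc (\<mu>s m)}" for m
  have sigK: "\<sigma> \<le> csucc (\<mu>s m)" for m
  proof -
    have "\<sigma> \<le> \<mu>s 0" using sigma_mus by simp
    also have "\<dots> \<le> \<mu>s m" using mus_le by simp
    also have "\<dots> \<le> csucc (\<mu>s m)" using cs_gt[of m] by simp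
    finally show ?thesis .
  qed
  have sK: "card_le {..<\<sigma>} (K m)" for m using sigK[of m] unfolding K_def by (intro card_le_sub) simp
  have K_inf: "infinite (K m)" for m
  proof
    assume "finite (K m)"
    moreover have "{..<\<sigma>} \<subseteq> K m" using sigK[of m] unfolding K_def by simp
    ultimately show False using sig_inf finite_subset by blast
  qed
  have Cm_sub: "Cm c0 C \<sigma> \<delta> m \<subseteq> {..<\<delta>}" if "\<delta> \<in> S" for \<delta> m
  proof -
    have "C \<delta> \<subseteq> {..<\<delta>}" using C_club that unfolding club_in_def by blast
    then show ?thesis using C_c0 that unfolding Cm_def by blast
  qed
  have Cm_card: "card_le (Cm c0 C \<sigma> \<delta> m) (K m)" if dS: "\<delta> \<in> S" for \<delta> m
  proof -
    have p1: "card_le (c0 \<delta> ` {..<\<sigma>}) (K m)" by (rule card_le_trans[OF card_le_image sK])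
    have "card_le (\<Union>i\<in>{..m}. C \<delta> \<inter> Iv c0 \<delta> \<epsilon> i) (K m)" if e: "\<epsilon> < \<sigma>" for \<epsilon>
    proof (rule card_le_UN[OF K_inf])
      show "card_le {..m} (K m)" using K_inf card_le_finite by blast
      show "\<forall>i\<in>{..m}. card_le (C \<delta> \<inter> Iv c0 \<delta> \<epsilon> i) (K m)"
      proof
        fix i assume "i \<in> {..m}"
        then have a: "card_le {..<csucc (\<mu>s i)} (K m)" unfolding K_def using cs_mono[of i m]
          by (intro card_le_sub) simp
        have b: "card_le (C \<delta> \<inter> Iv c0 \<delta> \<epsilon> i) {..<csucc (\<mu>s i)}" using C_size dS e by blast
        show "card_le (C \<delta> \<inter> Iv c0 \<delta> \<epsilon> i) (K m)" by (rule card_le_trans[OF b a])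
      qed
    qed
    then have p2: "card_le (\<Union>\<epsilon>\<in>{..<\<sigma>}. \<Union>i\<in>{..m}. C \<delta> \<inter> Iv c0 \<delta> \<epsilon> i) (K m)"
      by (intro card_le_UN[OF K_inf sK]) simp
    show ?thesis unfolding Cm_def using card_le_Un[OF K_inf p1 p2] .
  qed
  have Cm_mono: "Cm c0 C \<sigma> \<delta> m \<subseteq> Cm c0 C \<sigma> \<delta> (Suc m)" for \<delta> m
    unfolding Cm_def by auto
  define F where "F m \<delta> = (if \<delta> \<in> S then Cm c0 C \<sigma> \<delta> m else {})" for m \<delta>
  define A0 where "A0 (\<alpha>::'a) = (SOME A. A \<subseteq> {..<\<alpha>} \<and> (\<forall>\<beta><\<alpha>. \<exists>\<gamma>\<in>A. \<beta> \<le> \<gamma>) \<and> card_eq A {..<cf \<alpha>})" for \<alpha>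
  have A0: "A0 \<alpha> \<subseteq> {..<\<alpha>} \<and> (\<forall>\<beta><\<alpha>. \<exists>\<gamma>\<in>A0 \<alpha>. \<beta> \<le> \<gamma>) \<and> card_eq (A0 \<alpha>) {..<cf \<alpha>}" for \<alpha>
    unfolding A0_def by (rule someI_ex) (rule cf_P)
  define e where "e (\<alpha>::'a) m = eset (F m) \<alpha> (A0 \<alpha>)" for \<alpha> m
  define B where "B (\<alpha>::'a) m = {..<cf \<alpha>} <+> K m" for \<alpha> m
  have B_inf: "infinite (B \<alpha> m)" for \<alpha> m
    using K_inf[of m] unfolding B_def by simp
  have KB: "card_le (K m) (B \<alpha> m)" for \<alpha> m unfolding B_def card_le_def by (rule card_of_Plus2)
  have A0B: "card_le (A0 \<alpha>) (B \<alpha> m)" for \<alpha> m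
  proof -
    have a: "card_le (A0 \<alpha>) {..<cf \<alpha>}" using A0[of \<alpha>] unfolding card_eq_def card_le_def by (simp add: ordIso_iff_ordLeq)
    have b: "card_le {..<cf \<alpha>} (B \<alpha> m)" unfolding B_def card_le_def by (rule card_of_Plus1)
    show ?thesis by (rule card_le_trans[OF a b])
  qed
  have FB: "card_le (F m d) (B \<alpha> m)" for \<alpha> m d
  proof (cases "d \<in> S")
    case True
    then show ?thesis unfolding F_def by (simp add: card_le_trans[OF Cm_card KB])
  next
    case False
    then show ?thesis unfolding F_def by (simp add: card_le_sub card_le_trans[OF _ KB])
  qed
  have Fsub: "F m d \<subseteq> {..<d}" for m d unfolding F_def using Cm_sub by simp
  have props: "club_in (e \<alpha> m) \<alpha>" "card_le (e \<alpha> m) (B \<alpha> m)"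
    "\<forall>\<delta>\<in>e \<alpha> m. F m \<delta> \<subseteq> e \<alpha> m \<or>
        (\<exists>g::nat \<Rightarrow> 'a. range g \<subseteq> {..<\<delta>} \<and> (\<forall>\<beta><\<delta>. \<exists>n. \<beta> \<le> g n))" for \<alpha> m
    unfolding e_def using eset_props[of "A0 \<alpha>" \<alpha> "F m" "B \<alpha> m", OF _ _ Fsub B_inf A0B FB] A0[of \<alpha>] by blast+
  show ?thesis
  proof (intro exI[of _ e] conjI allI ballI)
    fix \<alpha> m
    show "club_in (e \<alpha> m) \<alpha>" by (rule props(1))
    show "e \<alpha> m \<subseteq> e \<alpha> (Suc m)" unfolding e_def by (rule eset_mono_F) (simp add: F_def Cm_mono)
    show "card_le (e \<alpha> m) ({..<cf \<alpha>} <+> {..<csucc (\<mu>s m)})" using props(2) unfolding B_def K_def .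
    fix \<delta> assume d: "\<delta> \<in> S \<inter> e \<alpha> m"
    show "Cm c0 C \<sigma> \<delta> m \<subseteq> e \<alpha> m"
    proof (cases "F m \<delta> \<subseteq> e \<alpha> m")
      case True then show ?thesis using d unfolding F_def by simp
    next
      case False
      then obtain g :: "nat \<Rightarrow> 'a" where g: "range g \<subseteq> {..<\<delta>}" "\<forall>\<beta><\<delta>. \<exists>n. \<beta> \<le> g n"
        using props(3)[of \<alpha> m] d by blast
      have "\<forall>\<beta><\<delta>. \<exists>\<gamma>\<in>range g. \<beta> \<le> \<gamma>" using g(2) by blast
      then have c1: "card_le {..<cf \<delta>} (range g)" using CF g(1) by blast
      have "cf \<delta> = \<sigma>" using S_cf d by auto
      then have "card_le {..<\<sigma>} (range g)" using c1 by simp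
      then have "card_le {..<\<sigma>} (UNIV::nat set)" by (rule card_le_trans[OF _ card_le_image])
      then show ?thesis using nocount by blast
    qed
  qed
qed

end
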